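(* Let $k$ be a field, $Q=k[x,y,z]$, $\mathfrak m=(x,y,z)$, and let $I\subseteq\mathfrak m^2$ be a homogeneous integrally closed ideal. Then $[I:x]\cdot[I:(y,z)]\subseteq I$.
   Context: For ideals $I,L$ of $Q$, $I:L=\{f\in Q: fL\subseteq I\}$ and $I:f=I:(f)$. An ideal is integrally closed if it equals its integral closure. *)

theory Defs
  imports Main "HOL-Computational_Algebra.Polynomial"
begin

definition is_ideal :: "'r::comm_ring_1 set \<Rightarrow> bool" where
  "is_ideal I \<longleftrightarrow> 0 \<in> I \<and> (\<forall>a\<in>I. \<forall>b\<in>I. a + b \<in> I) \<and> (\<forall>r. \<forall>a\<in>I. r * a \<in> I)"

definition ideal_gen :: "'r::comm_ring_1 set \<Rightarrow> 'r set" where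
  "ideal_gen S = {\<Sum>s\<in>F. c s * s | F c. finite F \<and> F \<subseteq> S}"

definition ideal_prod :: "'r::comm_ring_1 set \<Rightarrow> 'r set \<Rightarrow> 'r set" where
  "ideal_prod I J = ideal_gen {a * b | a b. a \<in> I \<and> b \<in> J}"

fun ideal_pow :: "'r::comm_ring_1 set \<Rightarrow> nat \<Rightarrow> 'r set" where
  "ideal_pow I 0 = UNIV"
| "ideal_pow I (Suc n) = ideal_prod I (ideal_pow I n)"

definition ideal_colon :: "'r::comm_ring_1 set \<Rightarrow> 'r set \<Rightarrow> 'r set" where
  "ideal_colon I L = {f. \<forall>g\<in>L. f * g \<in> I}"

definition integral_closure :: "'r::comm_ring_1 set \<Rightarrow> 'r set" where
  "integral_closure I = {f. \<exists>n a. n \<ge> 1 \<and> (\<forall>i\<in>{1..n}. a i \<in> ideal_pow I i) \<and>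
       f ^ n + (\<Sum>i=1..n. a i * f ^ (n - i)) = 0}"

definition integrally_closed :: "'r::comm_ring_1 set \<Rightarrow> bool" where
  "integrally_closed I \<longleftrightarrow> integral_closure I = I"

text \<open>Q = k[x,y,z] modelled as ((k[z])[y])[x].\<close>
type_synonym 'a poly3 = "'a poly poly poly"

definition varX :: "'a::field poly3" where "varX = [:0, 1:]"
definition varY :: "'a::field poly3" where "varY = [:[:0, 1:]:]"
definition varZ :: "'a::field poly3" where "varZ = [:[:[:0, 1:]:]:]"

definition coeff3 :: "'a::field poly3 \<Rightarrow> nat \<Rightarrow> nat \<Rightarrow> nat \<Rightarrow> 'a" where
  "coeff3 p i j l = coeff (coeff (coeff p i) j) l"

definition homogeneous :: "'a::field poly3 \<Rightarrow> bool" where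
  "homogeneous p \<longleftrightarrow> (\<exists>d. \<forall>i j l. coeff3 p i j l \<noteq> 0 \<longrightarrow> i + j + l = d)"

definition homogeneous_ideal :: "'a::field poly3 set \<Rightarrow> bool" where
  "homogeneous_ideal I \<longleftrightarrow> is_ideal I \<and> I = ideal_gen {f \<in> I. homogeneous f}"

definition max_ideal :: "'a::field poly3 set" where
  "max_ideal = ideal_gen {varX, varY, varZ}"

end

theory Submission
  imports Defs
begin

lemma iden: fixes x y z al be ga a b c f g :: "'r::comm_ring_1"
  assumes "f = al*x+be*y+ga*z" "g = a*x+b*y+c*z"
  shows "(f*g)^2 + (-(a*(f*x)+be*(g*y)+ga*(g*z))) * (f*g) + ((f*x)*(g*y)*(a*be-b*al)+(f*x)*(g*z)*(a*ga-c*al)) = 0"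
  unfolding assms power2_eq_square by (simp add: algebra_simps)

lemma closed_sum:
  assumes "0 \<in> P" "\<And>a b. a\<in>P \<Longrightarrow> b\<in>P \<Longrightarrow> a+b\<in>P" "finite F" "\<And>s. s\<in>F \<Longrightarrow> h s \<in> P"
  shows "sum h F \<in> P"
  using assms(3,4) by (induction F rule: finite_induct) (auto intro: assms(1,2))

lemma gen_sub:
  assumes "0 \<in> P" "\<And>a b. a\<in>P \<Longrightarrow> b\<in>P \<Longrightarrow> a+b\<in>P" "\<And>r s. s\<in>S \<Longrightarrow> r*s \<in> P"
  shows "ideal_gen S \<subseteq> P"
proof
  fix v assume "v \<in> ideal_gen S"
  then obtain F c where v: "v = (\<Sum>s\<in>F. c s * s)" "finite F" "F \<subseteq> S"
    unfolding ideal_gen_def by blast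
  show "v \<in> P" unfolding v(1) using v(2,3)
    by (intro closed_sum[OF assms(1,2)]) (auto intro: assms(3))
qed

lemma gen_super: "s \<in> S \<Longrightarrow> s \<in> ideal_gen S"
  unfolding ideal_gen_def
  by (rule CollectI, rule exI[of _ "{s}"], rule exI[of _ "\<lambda>_. 1"]) simp

lemma gen_ideal: "is_ideal (ideal_gen S)"
  unfolding is_ideal_def
proof (intro conjI ballI allI)
  show "0 \<in> ideal_gen S" unfolding ideal_gen_def
    by (rule CollectI, rule exI[of _ "{}"]) simp
next
  fix a b assume "a \<in> ideal_gen S" "b \<in> ideal_gen S"
  then obtain F c G d where a: "a = (\<Sum>s\<in>F. c s * s)" "finite F" "F \<subseteq> S"
    and b: "b = (\<Sum>s\<in>G. d s * s)" "finite G" "G \<subseteq> S"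
    unfolding ideal_gen_def by blast
  define e where "e s = (if s \<in> F then c s else 0) + (if s \<in> G then d s else 0)" for s
  have "(\<Sum>s\<in>F\<union>G. e s * s) = (\<Sum>s\<in>F\<union>G. (if s \<in> F then c s * s else 0)) + (\<Sum>s\<in>F\<union>G. (if s \<in> G then d s * s else 0))"
    unfolding sum.distrib[symmetric] by (rule sum.cong) (auto simp: e_def distrib_right)
  also have "\<dots> = a + b" unfolding a b
    using a(2) b(2) by (simp add: sum.If_cases Int_absorb1)
  finally show "a + b \<in> ideal_gen S" unfolding ideal_gen_def
    using a b by (intro CollectI exI[of _ "F\<union>G"] exI[of _ e]) auto
next
  fix r a assume "a \<in> ideal_gen S"
  then obtain F c where a: "a = (\<Sum>s\<in>F. c s * s)" "finite F" "F \<subseteq> S"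
    unfolding ideal_gen_def by blast
  have "r * a = (\<Sum>s\<in>F. (r * c s) * s)" unfolding a by (simp add: sum_distrib_left mult.assoc)
  then show "r * a \<in> ideal_gen S" unfolding ideal_gen_def using a
    by (intro CollectI exI[of _ F] exI[of _ "\<lambda>s. r * c s"]) auto
qed

lemma ideal_sub: "is_ideal I \<Longrightarrow> S \<subseteq> I \<Longrightarrow> ideal_gen S \<subseteq> I"
  by (rule gen_sub) (auto simp: is_ideal_def)

lemma pow1: "a \<in> I \<Longrightarrow> a \<in> ideal_pow I 1"
proof -
  assume "a \<in> I"
  then have "a*1 \<in> {a * b |a b. a \<in> I \<and> b \<in> (UNIV::'a set)}" by blast
  from gen_super[OF this] show ?thesis by (simp add: ideal_prod_def)
qed

lemma pow2: "a \<in> I \<Longrightarrow> b \<in> I \<Longrightarrow> a * b \<in> ideal_pow I 2"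
  using gen_super[of "a*b" "{a * b |a b. a \<in> I \<and> b \<in> ideal_pow I 1}"] pow1[of b I]
  by (auto simp: ideal_prod_def numeral_2_eq_2)

definition c0 :: "'a::field poly3 \<Rightarrow> 'a" where "c0 p = coeff (coeff (coeff p 0) 0) 0"
definition lx :: "'a::field poly3 \<Rightarrow> 'a" where "lx p = coeff (coeff (coeff p 1) 0) 0"
definition ly :: "'a::field poly3 \<Rightarrow> 'a" where "ly p = coeff (coeff (coeff p 0) 1) 0"

lemma c0_mult: "c0 (p*q) = c0 p * c0 q"
  by (simp add: c0_def coeff_mult)
lemma lx_mult: "lx (p*q) = c0 p * lx q + lx p * c0 q"
  by (simp add: c0_def lx_def coeff_mult)
lemma ly_mult: "ly (p*q) = c0 p * ly q + ly p * c0 q"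
  by (simp add: c0_def ly_def coeff_mult)
lemma c0_add: "c0 (p+q) = c0 p + c0 q" by (simp add: c0_def)
lemma lx_add: "lx (p+q) = lx p + lx q" by (simp add: lx_def)
lemma ly_add: "ly (p+q) = ly p + ly q" by (simp add: ly_def)

lemma max_Z0: "max_ideal \<subseteq> {p::'a::field poly3. c0 p = 0}"
  unfolding max_ideal_def
  by (rule gen_sub) (auto simp: c0_add c0_mult varX_def varY_def varZ_def c0_def[of 0] c0_def[of "[:_:]"] c0_def[of "[:_,_:]"])

lemma pow2_Z2: "ideal_pow (max_ideal::'a::field poly3 set) 2 \<subseteq> {p. c0 p = 0 \<and> lx p = 0 \<and> ly p = 0}"
proof -
  have 1: "ideal_pow (max_ideal::'a::field poly3 set) 1 \<subseteq> {p. c0 p = 0}"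
  proof -
    have "ideal_prod (max_ideal::'a::field poly3 set) UNIV \<subseteq> {p. c0 p = 0}"
      unfolding ideal_prod_def
    proof (rule gen_sub)
      show "0 \<in> {p::'a poly3. c0 p = 0}" by (simp add: c0_def)
      show "\<And>a b. a \<in> {p::'a poly3. c0 p = 0} \<Longrightarrow> b \<in> {p. c0 p = 0} \<Longrightarrow> a + b \<in> {p. c0 p = 0}"
        by (simp add: c0_add)
      show "\<And>r s. s \<in> {a * b |a b. a \<in> max_ideal \<and> b \<in> UNIV} \<Longrightarrow> r * s \<in> {p::'a poly3. c0 p = 0}"
        using max_Z0 by (auto simp: c0_mult)
    qed
    then show ?thesis by simp
  qed
  have eq2: "ideal_pow (max_ideal::'a::field poly3 set) 2 = ideal_prod max_ideal (ideal_pow max_ideal 1)"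
    by (simp add: numeral_2_eq_2)
  show ?thesis
    unfolding eq2 ideal_prod_def
  proof (rule gen_sub)
    show "0 \<in> {p::'a poly3. c0 p = 0 \<and> lx p = 0 \<and> ly p = 0}" by (simp add: c0_def lx_def ly_def)
    show "\<And>a b. a \<in> {p::'a poly3. c0 p = 0 \<and> lx p = 0 \<and> ly p = 0} \<Longrightarrow> b \<in> {p. c0 p = 0 \<and> lx p = 0 \<and> ly p = 0} \<Longrightarrow> a + b \<in> {p. c0 p = 0 \<and> lx p = 0 \<and> ly p = 0}"
      by (simp add: c0_add lx_add ly_add)
    fix r s assume "s \<in> {a * b |a b. a \<in> (max_ideal::'a poly3 set) \<and> b \<in> ideal_pow max_ideal 1}"
    then obtain a b where "s = a*b" "c0 a = 0" "c0 b = 0" using max_Z0 1 by fastforce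
    then show "r * s \<in> {p. c0 p = 0 \<and> lx p = 0 \<and> ly p = 0}"
      by (simp add: c0_mult lx_mult ly_mult)
  qed
qed

lemma dec1: "\<exists>q. (p::'b::comm_ring_1 poly) = [:coeff p 0:] + [:0,1:]*q"
proof (cases p)
  case (pCons a q)
  then show ?thesis by (intro exI[of _ q]) simp
qed

lemma const_add: "[:a + b:] = [:a:] + [:b::'b::comm_ring_1:]" by simp
lemma const_mult: "[:a * b:] = [:a:] * [:b::'b::comm_ring_1:]" by simp

lemma dec3:
  assumes "c0 (f::'a::field poly3) = 0"
  shows "\<exists>al be ga. f = al*varX + be*varY + ga*varZ"
proof -
  obtain F where F: "f = [:coeff f 0:] + [:0,1:]*F" using dec1 by blast
  obtain G where G: "coeff f 0 = [:coeff (coeff f 0) 0:] + [:0,1:]*G" using dec1 by blast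
  obtain H where H: "coeff (coeff f 0) 0 = [:coeff (coeff (coeff f 0) 0) 0:] + [:0,1:]*H" using dec1 by blast
  have c: "coeff (coeff (coeff f 0) 0) 0 = 0" using assms by (simp add: c0_def)
  have "f = F*varX + [:G:]*varY + [:[:H:]:]*varZ"
    apply (subst F)
    apply (subst G)
    apply (subst H)
    apply (simp only: c)
    by (simp add: varX_def varY_def varZ_def const_add const_mult algebra_simps)
  then show ?thesis by blast
qed

theorem mainTheorem9:
  fixes I :: "'a::field poly3 set"
  assumes "homogeneous_ideal I"
    and "integrally_closed I"
    and "I \<subseteq> ideal_pow max_ideal 2"
  shows "ideal_prod (ideal_colon I {varX}) (ideal_colon I (ideal_gen {varY, varZ})) \<subseteq> I"
proof -
  have id: "is_ideal I" using assms(1) by (simp add: homogeneous_ideal_def)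
  have key: "f * g \<in> I" if f: "f \<in> ideal_colon I {varX}" and g: "g \<in> ideal_colon I (ideal_gen {varY, varZ})" for f g
  proof -
    have A: "f * varX \<in> I" using f by (simp add: ideal_colon_def)
    have B: "g * varY \<in> I" using g gen_super[of varY "{varY, varZ}"] unfolding ideal_colon_def by blast
    have C: "g * varZ \<in> I" using g gen_super[of varZ "{varY, varZ}"] unfolding ideal_colon_def by blast
    have "lx (f * varX) = 0" using A assms(3) pow2_Z2 by blast
    then have cf: "c0 f = 0" by (simp add: lx_mult varX_def c0_def lx_def)
    have "ly (g * varY) = 0" using B assms(3) pow2_Z2 by blast
    then have cg: "c0 g = 0" by (simp add: ly_mult varY_def c0_def ly_def)
    obtain al be ga where fd: "f = al*varX + be*varY + ga*varZ" using dec3[OF cf] by blast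
    obtain a b c where gd: "g = a*varX + b*varY + c*varZ" using dec3[OF cg] by blast
    define a1 where "a1 = (-(a*(f*varX)+be*(g*varY)+ga*(g*varZ)))"
    define a2 where "a2 = ((a*be-b*al)*((f*varX)*(g*varY))+(a*ga-c*al)*((f*varX)*(g*varZ)))"
    have eq: "(f*g)^2 + a1 * (f*g) + a2 = 0"
      using iden[OF fd gd] unfolding a1_def a2_def by (simp add: algebra_simps)
    have a1I: "a1 \<in> ideal_pow I 1"
    proof -
      have "a1 \<in> I" unfolding a1_def using id A B C unfolding is_ideal_def
        by (metis mult_minus1)
      then show ?thesis by (rule pow1)
    qed
    have a2I: "a2 \<in> ideal_pow I 2"
    proof -
      have i2: "is_ideal (ideal_pow I 2)" by (simp add: numeral_2_eq_2 ideal_prod_def gen_ideal)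
      show ?thesis unfolding a2_def using i2 pow2[OF A B] pow2[OF A C] unfolding is_ideal_def by blast
    qed
    have "f * g \<in> integral_closure I"
      unfolding integral_closure_def
    proof (intro CollectI exI[of _ 2] exI[of _ "\<lambda>i. if i = 1 then a1 else a2"] conjI)
      show "\<forall>i\<in>{1..2}. (if i = 1 then a1 else a2) \<in> ideal_pow I i"
      proof
        fix i :: nat assume "i \<in> {1..2}"
        then have "i = 1 \<or> i = 2" by auto
        then show "(if i = 1 then a1 else a2) \<in> ideal_pow I i" using a1I a2I by auto
      qed
      have s: "{1..2::nat} = {1,2}" by auto
      show "(f * g) ^ 2 + (\<Sum>i = 1..2. (if i = 1 then a1 else a2) * (f * g) ^ (2 - i)) = 0"
        using eq unfolding s by (simp add: add.assoc)
    qed simp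
    then show ?thesis using assms(2) by (simp add: integrally_closed_def)
  qed
  show ?thesis unfolding ideal_prod_def
    by (rule ideal_sub[OF id]) (auto intro: key)
qed

end
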